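(* Let $\mathcal{X}$ be a discrete set and let $\mathcal{A}$ be an $\varepsilon$-differentially private randomized algorithm that, given a dataset $S\in\mathcal{X}^n$, outputs a function from $\mathcal{X}$ to $[0,1]$. Let $\mathcal{P}$ be any distribution over $\mathcal{X}$, let $\mathbf{S}$ be a random variable distributed according to $\mathcal{P}^n$, and let $\boldsymbol{\phi}=\mathcal{A}(\mathbf{S})$. Then for any $\beta>0$, $\tau>0$ and $n\ge 12\ln(4/\beta)/\tau^2$, if $\varepsilon\le\tau/2$ then $$\Pr\left[\,\left|\mathcal{P}[\boldsymbol{\phi}]-\mathcal{E}_{\mathbf{S}}[\boldsymbol{\phi}]\right|>\tau\,\right]\le\beta,$$ where the probability is over the randomness of $\mathcal{A}$ and of $\mathbf{S}$.
   Context: For a function $\psi:\mathcal{X}\to[0,1]$, $\mathcal{P}[\psi]=\mathbb{E}_{x\sim\mathcal{P}}[\psi(x)]$, and for a dataset $S=(x_1,\dots,x_n)$, $\mathcal{E}_S[\psi]=\frac1n\sum_{i=1}^n\psi(x_i)$ is the empirical average. Two datasets in $\mathcal{X}^n$ are adjacent if they differ in a single element. A randomized algorithm $\mathcal{A}$ with domain $\mathcal{X}^n$ is $(\varepsilon,\delta)$-differentially private if for every set $\mathcal{S}$ of outputs and every pair of adjacent datasets $x,y$, $\Pr[\mathcal{A}(x)\in\mathcal{S}]\le e^{\varepsilon}\Pr[\mathcal{A}(y)\in\mathcal{S}]+\delta$ (probability over the coins of $\mathcal{A}$); $\varepsilon$-differentially private means $(\varepsilon,0)$-differentially private. *)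

theory Defs
  imports "HOL-Probability.Probability"
begin

definition adjacent :: "'a list \<Rightarrow> 'a list \<Rightarrow> bool" where
  "adjacent S T \<longleftrightarrow> length S = length T \<and> card {i. i < length S \<and> S ! i \<noteq> T ! i} = 1"

definition out_space :: "('a \<Rightarrow> real) measure" where
  "out_space = PiM UNIV (\<lambda>_. borel)"

text \<open>A randomized algorithm on X^n is given by its output distribution on each dataset.\<close>
definition diff_private :: "real \<Rightarrow> real \<Rightarrow> nat \<Rightarrow> ('a list \<Rightarrow> 'b measure) \<Rightarrow> bool" where
  "diff_private \<epsilon> \<delta> n A \<longleftrightarrow>
     (\<forall>x y. length x = n \<longrightarrow> length y = n \<longrightarrow> adjacent x y \<longrightarrow>
        (\<forall>E \<in> sets (A x). measure (A x) E \<le> exp \<epsilon> * measure (A y) E + \<delta>))"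

definition pop_avg :: "'a pmf \<Rightarrow> ('a \<Rightarrow> real) \<Rightarrow> real" where
  "pop_avg P \<psi> = measure_pmf.expectation P \<psi>"

definition emp_avg :: "'a list \<Rightarrow> ('a \<Rightarrow> real) \<Rightarrow> real" where
  "emp_avg S \<psi> = (\<Sum>i<length S. \<psi> (S ! i)) / real (length S)"

end

theory Submission
  imports Defs
begin


lemma exp_cubic_upper:
  fixes u :: real assumes "0 \<le> u" "u \<le> 1/2"
  shows "exp u \<le> 1 + u + u^2/2 + u^3/3"
proof -
  obtain t where t: "\<bar>t\<bar> \<le> \<bar>u\<bar>" "exp u = (\<Sum>m<3. (u ^ m) / fact m) + (exp t / fact 3) * u ^ 3"
    using Maclaurin_exp_le[of u 3] by blast
  have "exp t \<le> exp (1/2)" using t(1) assms by simp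
  also have "\<dots> \<le> 1 + 1/2 + (1/2)^2" by (rule exp_bound) auto
  finally have et: "exp t \<le> 2" by (simp add: power2_eq_square)
  have "(exp t / fact 3) * u ^ 3 \<le> (2 / 6) * u^3"
    using et assms by (intro mult_right_mono) (auto simp: fact_numeral)
  then show ?thesis using t(2) by (simp add: eval_nat_numeral fact_numeral)
qed

lemma poly_Q:
  fixes t :: real assumes t: "0 \<le> t" "t \<le> 1"
  shows "(1 + t/2 + t^2/8 + t^3/24)^5 - 1 - t/2 - t^2/8 \<le> 2*t + 3*t^2 + 7*t^3"
proof -
  define vv where "vv = t/2 + t^2/8 + t^3/24"
  have e5: "(1+vv)^5 = 1 + 5* vv + 10* vv^2 + 10* vv^3 + 5* vv^4 + vv^5"
    by (simp add: eval_nat_numeral algebra_simps)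
  have t2: "t^2 \<le> t" "t^3 \<le> t^2" using t by (auto simp: eval_nat_numeral mult_left_le_one_le)
  have vv0: "0 \<le> vv" using t unfolding vv_def by simp
  have v1: "vv \<le> 2*t/3" using t t2 unfolding vv_def by simp
  have v23: "vv \<le> 2/3" using v1 t by simp
  have "vv^3 * vv \<le> vv^3 * (2/3)" using vv0 v23 by (intro mult_left_mono) auto
  then have "vv^4 \<le> vv^3 * (2/3)" by (simp add: eval_nat_numeral algebra_simps)
  moreover have "vv^5 \<le> vv^3 * (4/9)" proof -
    have "vv^2 \<le> (2/3)^2" using vv0 v23 by (intro power_mono) auto
    then have "vv^3 * vv^2 \<le> vv^3 * (4/9)" using vv0 by (intro mult_left_mono) (auto simp: power2_eq_square)
    then show ?thesis by (simp add: eval_nat_numeral algebra_simps)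
  qed
  ultimately have h1: "10* vv^3 + 5* vv^4 + vv^5 \<le> vv^3 * (124/9)" by simp
  have "vv^3 \<le> (2*t/3)^3" using vv0 v1 by (intro power_mono) auto
  then have h2: "10* vv^3 + 5* vv^4 + vv^5 \<le> 992/243 * t^3" using h1 by (simp add: power_divide)
  have h3: "vv - t/2 \<le> t^2/6" using t2 unfolding vv_def by simp
  have "vv^2 - t^2/4 = (vv - t/2) * (vv + t/2)" by (simp add: algebra_simps power2_eq_square)
  also have "\<dots> \<le> (t^2/6) * (7*t/6)"
    using h3 v1 vv0 t by (intro mult_mono) (auto simp: vv_def)
  finally have h4: "10 * vv^2 \<le> 5*t^2/2 + 35/18 * t^3" by (simp add: eval_nat_numeral algebra_simps)
  have h5: "5* vv = 5*t/2 + 5*t^2/8 + 5*t^3/24" unfolding vv_def by simp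
  have "(1 + t/2 + t^2/8 + t^3/24)^5 = (1+vv)^5" unfolding vv_def by (simp add: add.assoc)
  moreover have "t^3 \<ge> 0" using t by simp
  ultimately show ?thesis using e5 h2 h4 h5 by linarith
qed

lemma a_bound:
  fixes t :: real assumes t: "0 \<le> t" "t \<le> 1"
  shows "exp (5*t/2) - exp (t/2) \<le> 2*t + 3*t^2 + 7*t^3"
proof -
  have s1: "exp (t/2) \<le> 1 + t/2 + t^2/8 + t^3/24"
    using exp_cubic_upper[of "t/2"] t by (simp add: power_divide)
  have s0: "1 + t/2 + t^2/8 \<le> exp (t/2)"
    using exp_lower_Taylor_quadratic[of "t/2"] t by (simp add: power_divide)
  have "exp (5*t/2) = exp (t/2) ^ 5" by (subst exp_of_nat_mult[symmetric]) simp
  also have "\<dots> \<le> (1 + t/2 + t^2/8 + t^3/24)^5" using s1 by (intro power_mono) auto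
  finally show ?thesis using s0 poly_Q[OF t] by linarith
qed

lemma quad_pos:
  fixes t p :: real assumes t: "0 \<le> t" "t \<le> 1"
  shows "0 \<le> 23/12 - (3 + 19*t/6) * p + (2 + 23*t^2/6) * p^2"
proof -
  define Z where "Z = 2 + 23*t^2/6"
  define q where "q = 3 + 19*t/6"
  have Z: "Z > 0" unfolding Z_def by (simp add: add_pos_nonneg)
  have d: "q^2 < 4 * (23/12) * Z"
  proof -
    have "4 * (23/12) * Z - q^2 = 19/3 - 19*t + 697/36*t^2"
      unfolding Z_def q_def by (simp add: algebra_simps power2_eq_square)
    also have "\<dots> = 697/36 * (t - 342/697)^2 + (19/3 - 697/36*(342/697)^2)"
      by (simp add: algebra_simps power2_eq_square)
    also have "\<dots> > 0" by (intro add_nonneg_pos) (auto simp: power2_eq_square)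
    finally show ?thesis by simp
  qed
  have "4 * Z * (23/12 - q * p + Z * p^2) = (2*Z*p - q)^2 + (4 * (23/12) * Z - q^2)"
    by (simp add: algebra_simps power2_eq_square)
  also have "\<dots> \<ge> 0" using d by simp
  finally have "0 \<le> 4 * Z * (23/12 - q * p + Z * p^2)" .
  then have "0 \<le> 23/12 - q * p + Z * p^2" using Z by (simp add: zero_le_mult_iff)
  then show ?thesis unfolding Z_def q_def .
qed

lemma per_sample:
  fixes t p e :: real
  assumes t: "0 \<le> t" "t \<le> 1" and p: "0 \<le> p" "p \<le> 1" and e: "0 \<le> e" "e \<le> t/2"
  shows "exp (-(2*t)*p) * (1 + (exp (2*t) - 1) * exp e * p) \<le> exp (2*t*t - t^2/12)"
proof -
  define a where "a = (exp (2*t) - 1) * exp e"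
  have "a \<le> (exp (2*t) - 1) * exp (t/2)" unfolding a_def using e t by (intro mult_left_mono) auto
  also have "\<dots> = exp (5*t/2) - exp (t/2)" by (simp add: algebra_simps flip: exp_add)
  also have "\<dots> \<le> 2*t + 3*t^2 + 7*t^3" by (rule a_bound[OF t])
  finally have a: "a \<le> 2*t + 3*t^2 + 7*t^3" .
  have R: "1 + 23*t^2/12 \<le> exp (2*t*t - t^2/12)"
    using exp_ge_add_one_self[of "2*t*t - t^2/12"] by (simp add: power2_eq_square)
  have E: "1 + 2*t*p + 2*t^2*p^2 \<le> exp (2*t*p)"
    using exp_lower_Taylor_quadratic[of "2*t*p"] t p by (simp add: power_mult_distrib mult_ac)
  have E0: "0 < 1 + 2*t*p + 2*t^2*p^2" using t p by (simp add: add_pos_nonneg)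
  have key: "1 + a * p \<le> (1 + 23*t^2/12) * (1 + 2*t*p + 2*t^2*p^2)"
  proof -
    have "1 + a*p \<le> 1 + (2*t + 3*t^2 + 7*t^3) * p" using a p by (intro add_left_mono mult_right_mono) auto
    moreover have "(1 + 23*t^2/12) * (1 + 2*t*p + 2*t^2*p^2) - (1 + (2*t + 3*t^2 + 7*t^3) * p)
        = t^2 * (23/12 - (3 + 19*t/6) * p + (2 + 23*t^2/6) * p^2)"
      by (simp add: algebra_simps power2_eq_square eval_nat_numeral)
    moreover have "0 \<le> t^2 * (23/12 - (3 + 19*t/6) * p + (2 + 23*t^2/6) * p^2)"
      using quad_pos[OF t, of p] by simp
    ultimately show ?thesis by linarith
  qed
  have "1 + a*p \<le> exp (2*t*t - t^2/12) * exp (2*t*p)"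
  proof -
    have "1 + a*p \<le> (1 + 23*t^2/12) * (1 + 2*t*p + 2*t^2*p^2)" by (rule key)
    also have "\<dots> \<le> exp (2*t*t - t^2/12) * (1 + 2*t*p + 2*t^2*p^2)"
      using R E0 by (intro mult_right_mono) auto
    also have "\<dots> \<le> exp (2*t*t - t^2/12) * exp (2*t*p)"
      using E by (intro mult_left_mono) auto
    finally show ?thesis .
  qed
  then have "exp (-(2*t)*p) * (1 + a*p) \<le> exp (-(2*t)*p) * (exp (2*t*t - t^2/12) * exp (2*t*p))"
    by (intro mult_left_mono) auto
  also have "\<dots> = exp (2*t*t - t^2/12)" by (simp flip: exp_add)
  finally show ?thesis unfolding a_def by (simp add: mult.assoc)
qed



lemma pop_nn:
  assumes "\<And>x. 0 \<le> \<psi> x \<and> \<psi> x \<le> 1"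
  shows "(\<integral>\<^sup>+x. ennreal (\<psi> x) \<partial>measure_pmf P) = ennreal (pop_avg P \<psi>)"
    and "0 \<le> pop_avg P \<psi>" and "pop_avg P \<psi> \<le> 1"
proof -
  have int: "integrable (measure_pmf P) \<psi>"
    by (rule measure_pmf.integrable_const_bound[where B=1]) (use assms in auto)
  show "(\<integral>\<^sup>+x. ennreal (\<psi> x) \<partial>measure_pmf P) = ennreal (pop_avg P \<psi>)"
    unfolding pop_avg_def by (rule nn_integral_eq_integral[OF int]) (use assms in auto)
  show "0 \<le> pop_avg P \<psi>" unfolding pop_avg_def using assms by (intro integral_nonneg_AE) auto
  have "pop_avg P \<psi> \<le> measure_pmf.expectation P (\<lambda>_. 1)"
    unfolding pop_avg_def using assms int by (intro integral_mono) auto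
  then show "pop_avg P \<psi> \<le> 1" by simp
qed

lemma pop_measurable:
  fixes V :: "('a::countable \<Rightarrow> real) \<Rightarrow> ('a \<Rightarrow> real)"
  assumes Vm: "\<And>x. (\<lambda>\<phi>. V \<phi> x) \<in> borel_measurable out_space"
    and Vb: "\<And>\<phi> x. 0 \<le> V \<phi> x \<and> V \<phi> x \<le> 1"
  shows "(\<lambda>\<phi>. pop_avg P (V \<phi>)) \<in> borel_measurable out_space"
proof -
  have eq: "pop_avg P (V \<phi>) = enn2real (\<integral>\<^sup>+x. ennreal (pmf P x) * ennreal (V \<phi> x) \<partial>count_space UNIV)" for \<phi>
    using pop_nn(1)[of "V \<phi>" P] pop_nn(2)[of "V \<phi>" P] Vb by (simp add: nn_integral_measure_pmf)
  have "(\<lambda>(\<phi>, x). ennreal (pmf P x) * ennreal (V \<phi> x)) \<in> borel_measurable (out_space \<Otimes>\<^sub>M count_space UNIV)"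
  proof (subst measurable_pair_swap_iff)
    show "(\<lambda>(x, y). case (y, x) of (\<phi>, x) \<Rightarrow> ennreal (pmf P x) * ennreal (V \<phi> x))
        \<in> borel_measurable (count_space UNIV \<Otimes>\<^sub>M out_space)"
      by (rule measurable_pair_measure_countable1) (auto intro!: measurable_compose[OF Vm] simp: split_beta)
  qed
  then have "(\<lambda>\<phi>. \<integral>\<^sup>+x. ennreal (pmf P x) * ennreal (V \<phi> x) \<partial>count_space UNIV) \<in> borel_measurable out_space"
    by (intro sigma_finite_measure.borel_measurable_nn_integral sigma_finite_measure_count_space_countable) auto
  then show ?thesis unfolding eq by measurable
qed

lemma nn_integral_pmf_swap:
  "(\<integral>\<^sup>+x. \<integral>\<^sup>+y. f x y \<partial>measure_pmf q \<partial>measure_pmf p) = (\<integral>\<^sup>+y. \<integral>\<^sup>+x. f x y \<partial>measure_pmf p \<partial>measure_pmf q)"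
proof -
  have "(\<integral>\<^sup>+x. \<integral>\<^sup>+y. f x y \<partial>measure_pmf q \<partial>measure_pmf p) = (\<integral>\<^sup>+z. case_prod f z \<partial>pair_pmf p q)"
    by (simp add: nn_integral_pair_pmf')
  also have "\<dots> = (\<integral>\<^sup>+z. case_prod f z \<partial>map_pmf (\<lambda>(x, y). (y, x)) (pair_pmf q p))"
    by (subst pair_commute_pmf) simp
  also have "\<dots> = (\<integral>\<^sup>+y. \<integral>\<^sup>+x. f x y \<partial>measure_pmf p \<partial>measure_pmf q)"
    by (simp add: nn_integral_pair_pmf' split_beta)
  finally show ?thesis .
qed

lemma replicate_pmf_split:
  assumes "j < n"
  shows "replicate_pmf n P = do {xs \<leftarrow> replicate_pmf j P; x \<leftarrow> P; ys \<leftarrow> replicate_pmf (n - Suc j) P; return_pmf (xs @ x # ys)}"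
proof -
  have "n = j + Suc (n - Suc j)" using assms by simp
  then have "replicate_pmf n P = replicate_pmf (j + Suc (n - Suc j)) P" by simp
  also have "\<dots> = do {xs \<leftarrow> replicate_pmf j P; x \<leftarrow> P; ys \<leftarrow> replicate_pmf (n - Suc j) P; return_pmf (xs @ x # ys)}"
    by (simp only: replicate_pmf_distrib replicate_pmf.simps(2) bind_assoc_pmf bind_return_pmf)
  finally show ?thesis .
qed

lemma exchange:
  fixes F :: "'a list \<Rightarrow> 'a \<Rightarrow> ennreal"
  assumes "j < n"
  shows "(\<integral>\<^sup>+S. \<integral>\<^sup>+w. F (S[j:=w]) (S!j) \<partial>measure_pmf P \<partial>measure_pmf (replicate_pmf n P))
       = (\<integral>\<^sup>+S. \<integral>\<^sup>+w. F S w \<partial>measure_pmf P \<partial>measure_pmf (replicate_pmf n P))"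
proof -
  let ?R = "replicate_pmf j P" and ?Q = "replicate_pmf (n - Suc j) P"
  have "(\<integral>\<^sup>+S. \<integral>\<^sup>+w. F (S[j:=w]) (S!j) \<partial>measure_pmf P \<partial>measure_pmf (replicate_pmf n P))
      = (\<integral>\<^sup>+xs. \<integral>\<^sup>+x. \<integral>\<^sup>+ys. \<integral>\<^sup>+w. F ((xs @ x # ys)[j:=w]) ((xs @ x # ys)!j) \<partial>P \<partial>?Q \<partial>P \<partial>?R)"
    by (subst replicate_pmf_split[OF assms]) simp
  also have "\<dots> = (\<integral>\<^sup>+xs. \<integral>\<^sup>+x. \<integral>\<^sup>+ys. \<integral>\<^sup>+w. F (xs @ w # ys) x \<partial>P \<partial>?Q \<partial>P \<partial>?R)"
    by (intro nn_integral_cong_AE) (auto simp: AE_measure_pmf_iff set_replicate_pmf list_update_append nth_append)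
  also have "\<dots> = (\<integral>\<^sup>+xs. \<integral>\<^sup>+x. \<integral>\<^sup>+w. \<integral>\<^sup>+ys. F (xs @ w # ys) x \<partial>?Q \<partial>P \<partial>P \<partial>?R)"
    by (subst nn_integral_pmf_swap) rule
  also have "\<dots> = (\<integral>\<^sup>+xs. \<integral>\<^sup>+w. \<integral>\<^sup>+x. \<integral>\<^sup>+ys. F (xs @ w # ys) x \<partial>?Q \<partial>P \<partial>P \<partial>?R)"
    by (subst nn_integral_pmf_swap) rule
  also have "\<dots> = (\<integral>\<^sup>+xs. \<integral>\<^sup>+w. \<integral>\<^sup>+ys. \<integral>\<^sup>+x. F (xs @ w # ys) x \<partial>P \<partial>?Q \<partial>P \<partial>?R)"
    by (subst (2) nn_integral_pmf_swap) rule
  also have "\<dots> = (\<integral>\<^sup>+S. \<integral>\<^sup>+w. F S w \<partial>measure_pmf P \<partial>measure_pmf (replicate_pmf n P))"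
    by (subst replicate_pmf_split[OF assms]) simp
  finally show ?thesis .
qed




locale dpalg =
  fixes A :: "'a::countable list \<Rightarrow> ('a \<Rightarrow> real) measure" and n :: nat and \<epsilon> :: real
  assumes vA: "\<And>S. length S = n \<Longrightarrow> prob_space (A S) \<and> sets (A S) = sets out_space"
  and dpA: "\<And>x y E. length x = n \<Longrightarrow> length y = n \<Longrightarrow> adjacent x y \<Longrightarrow> E \<in> sets (A x) \<Longrightarrow>
              measure (A x) E \<le> exp \<epsilon> * measure (A y) E"
  and eps0: "0 \<le> \<epsilon>"
begin

lemma dp_nn:
  assumes S: "length S = n" and T: "length T = n" and ST: "S = T \<or> adjacent S T"
    and f: "f \<in> borel_measurable out_space"
  shows "(\<integral>\<^sup>+\<phi>. f \<phi> \<partial>A S) \<le> ennreal (exp \<epsilon>) * (\<integral>\<^sup>+\<phi>. f \<phi> \<partial>A T)"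
proof (cases "S = T")
  case True
  have "(\<integral>\<^sup>+\<phi>. f \<phi> \<partial>A S) = 1 * (\<integral>\<^sup>+\<phi>. f \<phi> \<partial>A T)" using True by simp
  also have "\<dots> \<le> ennreal (exp \<epsilon>) * (\<integral>\<^sup>+\<phi>. f \<phi> \<partial>A T)"
    using eps0 by (intro mult_right_mono) auto
  finally show ?thesis .
next
  case False
  with ST have adj: "adjacent S T" by simp
  interpret S: prob_space "A S" using vA[OF S] by simp
  interpret T: prob_space "A T" using vA[OF T] by simp
  have sS: "sets (A S) = sets out_space" and sT: "sets (A T) = sets out_space" using vA S T by auto
  have em: "emeasure (A S) X \<le> emeasure (scale_measure (ennreal (exp \<epsilon>)) (A T)) X" for X
  proof (cases "X \<in> sets out_space")
    case True
    have "emeasure (A S) X = ennreal (measure (A S) X)" by (simp add: S.emeasure_eq_measure)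
    also have "\<dots> \<le> ennreal (exp \<epsilon> * measure (A T) X)"
      using dpA[OF S T adj, of X] True sS by (intro ennreal_leI) auto
    also have "\<dots> = ennreal (exp \<epsilon>) * emeasure (A T) X"
      by (simp add: T.emeasure_eq_measure ennreal_mult)
    finally show ?thesis by simp
  next
    case False
    then show ?thesis using sS by (simp add: emeasure_notin_sets)
  qed
  have le: "A S \<le> scale_measure (ennreal (exp \<epsilon>)) (A T)"
    using em sS sT sets_eq_imp_space_eq[OF sS] sets_eq_imp_space_eq[OF sT]
    by (auto simp: le_measure_iff le_fun_def space_scale_measure)
  have "(\<integral>\<^sup>+\<phi>. f \<phi> \<partial>A S) \<le> (\<integral>\<^sup>+\<phi>. f \<phi> \<partial>scale_measure (ennreal (exp \<epsilon>)) (A T))"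
    by (rule nn_integral_mono_measure[OF _ le]) (simp add: sS sT)
  also have "\<dots> = ennreal (exp \<epsilon>) * (\<integral>\<^sup>+\<phi>. f \<phi> \<partial>A T)"
    using f by (intro nn_integral_scale_measure) (simp add: measurable_cong_sets[OF sT refl])
  finally show ?thesis .
qed

lemma adjacent_update:
  assumes "j < length S" "S[j:=w] \<noteq> S"
  shows "adjacent S (S[j:=w])"
proof -
  have "{i. i < length S \<and> S ! i \<noteq> S[j:=w] ! i} = {j}"
    using assms by (auto simp: nth_list_update)
  then show ?thesis unfolding adjacent_def by simp
qed

end


lemma swap_pmf_measure:
  fixes P :: "'b::countable pmf"
  assumes g: "\<And>w. g w \<in> borel_measurable M"
  shows "(\<integral>\<^sup>+w. \<integral>\<^sup>+\<phi>. g w \<phi> \<partial>M \<partial>measure_pmf P) = (\<integral>\<^sup>+\<phi>. \<integral>\<^sup>+w. g w \<phi> \<partial>measure_pmf P \<partial>M)"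
proof -
  have "(\<integral>\<^sup>+w. \<integral>\<^sup>+\<phi>. g w \<phi> \<partial>M \<partial>measure_pmf P) = (\<integral>\<^sup>+w. ennreal (pmf P w) * \<integral>\<^sup>+\<phi>. g w \<phi> \<partial>M \<partial>count_space UNIV)"
    by (rule nn_integral_measure_pmf)
  also have "\<dots> = (\<integral>\<^sup>+w. \<integral>\<^sup>+\<phi>. ennreal (pmf P w) * g w \<phi> \<partial>M \<partial>count_space UNIV)"
    by (intro nn_integral_cong nn_integral_cmult[symmetric] g)
  also have "\<dots> = (\<integral>\<^sup>+\<phi>. \<integral>\<^sup>+w. ennreal (pmf P w) * g w \<phi> \<partial>count_space UNIV \<partial>M)"
  proof (rule nn_integral_count_space_nn_integral[symmetric])
    show "countable (UNIV :: 'b set)" by simp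
    fix w show "(\<lambda>\<phi>. ennreal (pmf P w) * g w \<phi>) \<in> borel_measurable M"
      using g[of w] by measurable
  qed
  also have "\<dots> = (\<integral>\<^sup>+\<phi>. \<integral>\<^sup>+w. g w \<phi> \<partial>measure_pmf P \<partial>M)"
    by (intro nn_integral_cong nn_integral_measure_pmf[symmetric])
  finally show ?thesis .
qed

context dpalg begin

lemma core_step:
  fixes V :: "('a \<Rightarrow> real) \<Rightarrow> 'a \<Rightarrow> real" and K :: "('a \<Rightarrow> real) \<Rightarrow> real" and c :: real and P :: "'a pmf"
  assumes Vm: "\<And>x. (\<lambda>\<phi>. V \<phi> x) \<in> borel_measurable out_space"
    and Vb: "\<And>\<phi> x. 0 \<le> V \<phi> x \<and> V \<phi> x \<le> 1"
    and Km: "K \<in> borel_measurable out_space" and K0: "\<And>\<phi>. 0 \<le> K \<phi>" and c0: "0 \<le> c"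
    and m: "m < n"
  shows "(\<integral>\<^sup>+S. \<integral>\<^sup>+\<phi>. ennreal (K \<phi> * (1 + c * exp \<epsilon> * pop_avg P (V \<phi>))^m * (\<Prod>i\<in>{m..<n}. 1 + c * V \<phi> (S!i))) \<partial>A S \<partial>measure_pmf (replicate_pmf n P))
      \<le> (\<integral>\<^sup>+S. \<integral>\<^sup>+\<phi>. ennreal (K \<phi> * (1 + c * exp \<epsilon> * pop_avg P (V \<phi>))^(Suc m) * (\<Prod>i\<in>{Suc m..<n}. 1 + c * V \<phi> (S!i))) \<partial>A S \<partial>measure_pmf (replicate_pmf n P))"
proof -
  define pp where "pp = (\<lambda>\<phi>. pop_avg P (V \<phi>))"
  have pm[measurable]: "pp \<in> borel_measurable out_space"
    unfolding pp_def by (rule pop_measurable[OF Vm Vb])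
  have pp01: "0 \<le> pp \<phi>" "pp \<phi> \<le> 1" for \<phi> unfolding pp_def using pop_nn(2,3)[of "V \<phi>" P] Vb by auto
  note [measurable] = Vm Km
  define h where "h = (\<lambda>S \<phi>. K \<phi> * (1 + c * exp \<epsilon> * pp \<phi>)^m * (\<Prod>i\<in>{Suc m..<n}. 1 + c * V \<phi> (S!i)))"
  have h0: "0 \<le> h S \<phi>" for S \<phi> unfolding h_def using K0 c0 Vb pp01
    by (intro mult_nonneg_nonneg prod_nonneg) auto
  have hm[measurable]: "(\<lambda>\<phi>. h S \<phi>) \<in> borel_measurable out_space" for S
    unfolding h_def by measurable
  have hupd: "h (S[m:=w]) = h S" for S w
    unfolding h_def by (intro ext) (auto intro!: prod.cong simp: nth_list_update)
  let ?R = "measure_pmf (replicate_pmf n P)"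
  have mS: "f \<in> borel_measurable (A S)" if "length S = n" "f \<in> borel_measurable out_space" for S and f :: "_ \<Rightarrow> ennreal"
    by (subst measurable_cong_sets[OF conjunct2[OF vA[OF that(1)]] refl]) (rule that(2))
  define X where "X = (\<lambda>S. \<integral>\<^sup>+\<phi>. ennreal (h S \<phi>) \<partial>A S)"
  define Y where "Y = (\<lambda>S. \<integral>\<^sup>+\<phi>. ennreal (h S \<phi> * V \<phi> (S!m)) \<partial>A S)"
  define Z where "Z = (\<lambda>S. \<integral>\<^sup>+\<phi>. ennreal (h S \<phi> * pp \<phi>) \<partial>A S)"
  have eqL: "(\<integral>\<^sup>+\<phi>. ennreal (K \<phi> * (1 + c * exp \<epsilon> * pop_avg P (V \<phi>))^m * (\<Prod>i\<in>{m..<n}. 1 + c * V \<phi> (S!i))) \<partial>A S)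
      = X S + ennreal c * Y S" if "length S = n" for S
  proof -
    have "{m..<n} = insert m {Suc m..<n}" using m by auto
    then have "K \<phi> * (1 + c * exp \<epsilon> * pop_avg P (V \<phi>))^m * (\<Prod>i\<in>{m..<n}. 1 + c * V \<phi> (S!i))
        = h S \<phi> + c * (h S \<phi> * V \<phi> (S!m))" for \<phi>
      unfolding h_def pp_def by (simp add: algebra_simps)
    then have "(\<integral>\<^sup>+\<phi>. ennreal (K \<phi> * (1 + c * exp \<epsilon> * pop_avg P (V \<phi>))^m * (\<Prod>i\<in>{m..<n}. 1 + c * V \<phi> (S!i))) \<partial>A S)
        = (\<integral>\<^sup>+\<phi>. ennreal (h S \<phi>) + ennreal c * ennreal (h S \<phi> * V \<phi> (S!m)) \<partial>A S)"
      using h0 c0 Vb by (intro nn_integral_cong) (simp add: ennreal_plus ennreal_mult)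
    also have "\<dots> = X S + ennreal c * Y S"
      unfolding X_def Y_def
    proof -
      have m1: "(\<lambda>\<phi>. ennreal (h S \<phi>)) \<in> borel_measurable (A S)" by (rule mS[OF that]) measurable
      have m2: "(\<lambda>\<phi>. ennreal (h S \<phi> * V \<phi> (S!m))) \<in> borel_measurable (A S)" by (rule mS[OF that]) measurable
      have m3: "(\<lambda>\<phi>. ennreal c * ennreal (h S \<phi> * V \<phi> (S!m))) \<in> borel_measurable (A S)" by (rule mS[OF that]) measurable
      show "(\<integral>\<^sup>+\<phi>. ennreal (h S \<phi>) + ennreal c * ennreal (h S \<phi> * V \<phi> (S!m)) \<partial>A S) =
         (\<integral>\<^sup>+\<phi>. ennreal (h S \<phi>) \<partial>A S) + ennreal c * (\<integral>\<^sup>+\<phi>. ennreal (h S \<phi> * V \<phi> (S!m)) \<partial>A S)"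
        by (simp add: nn_integral_add[OF m1 m3] nn_integral_cmult[OF m2])
    qed
    finally show ?thesis .
  qed
  have eqR: "(\<integral>\<^sup>+\<phi>. ennreal (K \<phi> * (1 + c * exp \<epsilon> * pop_avg P (V \<phi>))^(Suc m) * (\<Prod>i\<in>{Suc m..<n}. 1 + c * V \<phi> (S!i))) \<partial>A S)
      = X S + ennreal (c * exp \<epsilon>) * Z S" if "length S = n" for S
  proof -
    have "K \<phi> * (1 + c * exp \<epsilon> * pop_avg P (V \<phi>))^(Suc m) * (\<Prod>i\<in>{Suc m..<n}. 1 + c * V \<phi> (S!i))
        = h S \<phi> + (c * exp \<epsilon>) * (h S \<phi> * pp \<phi>)" for \<phi>
      unfolding h_def pp_def by (simp add: algebra_simps)
    then have "(\<integral>\<^sup>+\<phi>. ennreal (K \<phi> * (1 + c * exp \<epsilon> * pop_avg P (V \<phi>))^(Suc m) * (\<Prod>i\<in>{Suc m..<n}. 1 + c * V \<phi> (S!i))) \<partial>A S)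
        = (\<integral>\<^sup>+\<phi>. ennreal (h S \<phi>) + ennreal (c * exp \<epsilon>) * ennreal (h S \<phi> * pp \<phi>) \<partial>A S)"
      using h0 c0 pp01 by (intro nn_integral_cong) (simp add: ennreal_plus ennreal_mult)
    also have "\<dots> = X S + ennreal (c * exp \<epsilon>) * Z S"
      unfolding X_def Z_def
    proof -
      have m1: "(\<lambda>\<phi>. ennreal (h S \<phi>)) \<in> borel_measurable (A S)" by (rule mS[OF that]) measurable
      have m2: "(\<lambda>\<phi>. ennreal (h S \<phi> * pp \<phi>)) \<in> borel_measurable (A S)" by (rule mS[OF that]) measurable
      have m3: "(\<lambda>\<phi>. ennreal (c * exp \<epsilon>) * ennreal (h S \<phi> * pp \<phi>)) \<in> borel_measurable (A S)" by (rule mS[OF that]) measurable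
      show "(\<integral>\<^sup>+\<phi>. ennreal (h S \<phi>) + ennreal (c * exp \<epsilon>) * ennreal (h S \<phi> * pp \<phi>) \<partial>A S) =
         (\<integral>\<^sup>+\<phi>. ennreal (h S \<phi>) \<partial>A S) + ennreal (c * exp \<epsilon>) * (\<integral>\<^sup>+\<phi>. ennreal (h S \<phi> * pp \<phi>) \<partial>A S)"
        by (simp add: nn_integral_add[OF m1 m3] nn_integral_cmult[OF m2])
    qed
    finally show ?thesis .
  qed
  have star: "(\<integral>\<^sup>+S. Y S \<partial>?R) \<le> ennreal (exp \<epsilon>) * (\<integral>\<^sup>+S. Z S \<partial>?R)"
  proof -
    define F where "F = (\<lambda>T x. \<integral>\<^sup>+\<phi>. ennreal (h T \<phi> * V \<phi> x) \<partial>A T)"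
    have "(\<integral>\<^sup>+S. Y S \<partial>?R) = (\<integral>\<^sup>+S. \<integral>\<^sup>+w. Y S \<partial>measure_pmf P \<partial>?R)"
      by (simp add: measure_pmf.emeasure_space_1)
    also have "\<dots> \<le> (\<integral>\<^sup>+S. \<integral>\<^sup>+w. ennreal (exp \<epsilon>) * F (S[m:=w]) (S!m) \<partial>measure_pmf P \<partial>?R)"
    proof (intro nn_integral_mono_AE)
      show "AE S in ?R. (\<integral>\<^sup>+w. Y S \<partial>measure_pmf P) \<le> (\<integral>\<^sup>+w. ennreal (exp \<epsilon>) * F (S[m:=w]) (S!m) \<partial>measure_pmf P)"
        unfolding AE_measure_pmf_iff
      proof (intro ballI nn_integral_mono)
        fix S w assume "S \<in> set_pmf (replicate_pmf n P)"
        then have S: "length S = n" by (simp add: set_replicate_pmf)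
        have "S = S[m:=w] \<or> adjacent S (S[m:=w])"
          using adjacent_update[of m S w] S m by (cases "S[m:=w] = S") auto
        then show "Y S \<le> ennreal (exp \<epsilon>) * F (S[m:=w]) (S!m)"
          unfolding Y_def F_def hupd using S by (intro dp_nn) auto
      qed
    qed
    also have "\<dots> = ennreal (exp \<epsilon>) * (\<integral>\<^sup>+S. \<integral>\<^sup>+w. F (S[m:=w]) (S!m) \<partial>measure_pmf P \<partial>?R)"
      by (simp add: nn_integral_cmult)
    also have "(\<integral>\<^sup>+S. \<integral>\<^sup>+w. F (S[m:=w]) (S!m) \<partial>measure_pmf P \<partial>?R) = (\<integral>\<^sup>+S. \<integral>\<^sup>+w. F S w \<partial>measure_pmf P \<partial>?R)"
      by (rule exchange[OF m])
    also have "\<dots> = (\<integral>\<^sup>+S. Z S \<partial>?R)"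
    proof (intro nn_integral_cong_AE)
      show "AE S in ?R. (\<integral>\<^sup>+w. F S w \<partial>measure_pmf P) = Z S"
        unfolding AE_measure_pmf_iff
      proof
        fix S assume "S \<in> set_pmf (replicate_pmf n P)"
        then have S: "length S = n" by (simp add: set_replicate_pmf)
        have "(\<integral>\<^sup>+w. F S w \<partial>measure_pmf P) = (\<integral>\<^sup>+\<phi>. \<integral>\<^sup>+w. ennreal (h S \<phi> * V \<phi> w) \<partial>measure_pmf P \<partial>A S)"
          unfolding F_def by (intro swap_pmf_measure mS[OF S]) measurable
        also have "\<dots> = Z S" unfolding Z_def
        proof (intro nn_integral_cong)
          fix \<phi>
          have "(\<integral>\<^sup>+w. ennreal (h S \<phi> * V \<phi> w) \<partial>measure_pmf P) = (\<integral>\<^sup>+w. ennreal (h S \<phi>) * ennreal (V \<phi> w) \<partial>measure_pmf P)"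
            using h0 Vb by (simp add: ennreal_mult)
          also have "\<dots> = ennreal (h S \<phi>) * ennreal (pp \<phi>)"
            unfolding pp_def using pop_nn(1)[of "V \<phi>" P] Vb by (simp add: nn_integral_cmult)
          finally show "(\<integral>\<^sup>+w. ennreal (h S \<phi> * V \<phi> w) \<partial>measure_pmf P) = ennreal (h S \<phi> * pp \<phi>)"
            using h0 pp01 by (simp add: ennreal_mult)
        qed
        finally show "(\<integral>\<^sup>+w. F S w \<partial>measure_pmf P) = Z S" .
      qed
    qed
    finally show ?thesis by simp
  qed
  have "(\<integral>\<^sup>+S. \<integral>\<^sup>+\<phi>. ennreal (K \<phi> * (1 + c * exp \<epsilon> * pop_avg P (V \<phi>))^m * (\<Prod>i\<in>{m..<n}. 1 + c * V \<phi> (S!i))) \<partial>A S \<partial>?R)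
      = (\<integral>\<^sup>+S. X S + ennreal c * Y S \<partial>?R)"
    by (intro nn_integral_cong_AE AE_pmfI eqL) (simp add: set_replicate_pmf)
  also have "\<dots> = (\<integral>\<^sup>+S. X S \<partial>?R) + ennreal c * (\<integral>\<^sup>+S. Y S \<partial>?R)"
    by (simp add: nn_integral_add nn_integral_cmult)
  also have "\<dots> \<le> (\<integral>\<^sup>+S. X S \<partial>?R) + ennreal c * (ennreal (exp \<epsilon>) * (\<integral>\<^sup>+S. Z S \<partial>?R))"
    using star by (intro add_left_mono mult_left_mono) auto
  also have "\<dots> = (\<integral>\<^sup>+S. X S + ennreal (c * exp \<epsilon>) * Z S \<partial>?R)"
    using c0 by (simp add: nn_integral_add nn_integral_cmult ennreal_mult mult.assoc)
  also have "\<dots> = (\<integral>\<^sup>+S. \<integral>\<^sup>+\<phi>. ennreal (K \<phi> * (1 + c * exp \<epsilon> * pop_avg P (V \<phi>))^(Suc m) * (\<Prod>i\<in>{Suc m..<n}. 1 + c * V \<phi> (S!i))) \<partial>A S \<partial>?R)"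
    by (intro nn_integral_cong_AE AE_pmfI eqR[symmetric]) (simp add: set_replicate_pmf)
  finally show ?thesis .
qed

end


context dpalg begin

lemma core_iter:
  fixes V :: "('a \<Rightarrow> real) \<Rightarrow> 'a \<Rightarrow> real" and K :: "('a \<Rightarrow> real) \<Rightarrow> real" and c :: real and P :: "'a pmf"
  assumes Vm: "\<And>x. (\<lambda>\<phi>. V \<phi> x) \<in> borel_measurable out_space"
    and Vb: "\<And>\<phi> x. 0 \<le> V \<phi> x \<and> V \<phi> x \<le> 1"
    and Km: "K \<in> borel_measurable out_space" and K0: "\<And>\<phi>. 0 \<le> K \<phi>" and c0: "0 \<le> c"
    and m: "m \<le> n"
  shows "(\<integral>\<^sup>+S. \<integral>\<^sup>+\<phi>. ennreal (K \<phi> * (1 + c * exp \<epsilon> * pop_avg P (V \<phi>))^0 * (\<Prod>i\<in>{0..<n}. 1 + c * V \<phi> (S!i))) \<partial>A S \<partial>measure_pmf (replicate_pmf n P))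
      \<le> (\<integral>\<^sup>+S. \<integral>\<^sup>+\<phi>. ennreal (K \<phi> * (1 + c * exp \<epsilon> * pop_avg P (V \<phi>))^m * (\<Prod>i\<in>{m..<n}. 1 + c * V \<phi> (S!i))) \<partial>A S \<partial>measure_pmf (replicate_pmf n P))"
  using m
proof (induction m)
  case 0
  then show ?case by simp
next
  case (Suc m)
  then have "m < n" by simp
  from Suc.IH[OF less_imp_le[OF this]] core_step[OF Vm Vb Km K0 c0 this, of P] show ?case
    by (rule order.trans)
qed

lemma upper_tail:
  fixes V :: "('a \<Rightarrow> real) \<Rightarrow> 'a \<Rightarrow> real" and P :: "'a pmf" and \<tau> :: real
  assumes Vm: "\<And>x. (\<lambda>\<phi>. V \<phi> x) \<in> borel_measurable out_space"
    and Vb: "\<And>\<phi> x. 0 \<le> V \<phi> x \<and> V \<phi> x \<le> 1"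
    and tau: "0 < \<tau>" "\<tau> \<le> 1" and et: "\<epsilon> \<le> \<tau>/2" and n0: "0 < n"
  shows "(\<integral>\<^sup>+S. emeasure (A S) {\<phi> \<in> space (A S). emp_avg S (V \<phi>) - pop_avg P (V \<phi>) > \<tau>} \<partial>measure_pmf (replicate_pmf n P))
     \<le> ennreal (exp (- (real n * \<tau>^2 / 12)))"
proof -
  define l where "l = 2 * \<tau>"
  define c where "c = exp l - 1"
  define pp where "pp = (\<lambda>\<phi>. pop_avg P (V \<phi>))"
  define K where "K = (\<lambda>\<phi>. exp (- l * pp \<phi>) ^ n)"
  define R where "R = exp (2*\<tau>*\<tau> - \<tau>^2/12)"
  let ?R = "measure_pmf (replicate_pmf n P)"
  have l0: "0 \<le> l" using tau by (simp add: l_def)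
  have c0: "0 \<le> c" using l0 by (simp add: c_def)
  have pm[measurable]: "pp \<in> borel_measurable out_space"
    unfolding pp_def by (rule pop_measurable[OF Vm Vb])
  note [measurable] = Vm
  have pp01: "0 \<le> pp \<phi>" "pp \<phi> \<le> 1" for \<phi> unfolding pp_def using pop_nn(2,3)[of "V \<phi>" P] Vb by auto
  have Km: "K \<in> borel_measurable out_space" unfolding K_def by measurable
  have K0: "0 \<le> K \<phi>" for \<phi> unfolding K_def by simp
  note [measurable] = Km
  have pm'[measurable]: "(\<lambda>\<phi>. pop_avg P (V \<phi>)) \<in> borel_measurable out_space"
    by (rule pop_measurable[OF Vm Vb])
  have mS: "f \<in> borel_measurable (A S)" if "length S = n" "f \<in> borel_measurable out_space" for S and f :: "_ \<Rightarrow> 'b::topological_space"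
    by (subst measurable_cong_sets[OF conjunct2[OF vA[OF that(1)]] refl]) (rule that(2))
  define G0 where "G0 = (\<lambda>S \<phi>. K \<phi> * (1 + c * exp \<epsilon> * pop_avg P (V \<phi>))^0 * (\<Prod>i\<in>{0..<n}. 1 + c * V \<phi> (S!i)))"
  define Gn where "Gn = (\<lambda>S \<phi>. K \<phi> * (1 + c * exp \<epsilon> * pop_avg P (V \<phi>))^n * (\<Prod>i\<in>{n..<n}. 1 + c * V \<phi> (S!i)))"
  have step1: "emeasure (A S) {\<phi> \<in> space (A S). emp_avg S (V \<phi>) - pop_avg P (V \<phi>) > \<tau>}
      \<le> ennreal (exp (- l * real n * \<tau>)) * (\<integral>\<^sup>+\<phi>. ennreal (G0 S \<phi>) \<partial>A S)" if S: "length S = n" for S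
  proof -
    define B where "B = {\<phi> \<in> space (A S). emp_avg S (V \<phi>) - pop_avg P (V \<phi>) > \<tau>}"
    have em: "(\<lambda>\<phi>. emp_avg S (V \<phi>)) \<in> borel_measurable out_space"
      unfolding emp_avg_def by measurable
    have "B \<in> sets (A S)" unfolding B_def
      using mS[OF S em] mS[OF S pm] unfolding pp_def by measurable
    then have "emeasure (A S) B = (\<integral>\<^sup>+\<phi>. indicator B \<phi> \<partial>A S)" by simp
    also have "\<dots> \<le> (\<integral>\<^sup>+\<phi>. ennreal (exp (- l * real n * \<tau>)) * ennreal (G0 S \<phi>) \<partial>A S)"
    proof (intro nn_integral_mono)
      fix \<phi>
      show "indicator B \<phi> \<le> ennreal (exp (- l * real n * \<tau>)) * ennreal (G0 S \<phi>)"
      proof (cases "\<phi> \<in> B")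
        case False then show ?thesis by simp
      next
        case True
        then have gt: "emp_avg S (V \<phi>) - pp \<phi> > \<tau>" unfolding B_def pp_def by simp
        have sum_eq: "(\<Sum>i<n. V \<phi> (S!i)) = real n * emp_avg S (V \<phi>)"
          unfolding emp_avg_def using S n0 by simp
        have "exp (l * (\<Sum>i<n. V \<phi> (S!i))) = (\<Prod>i<n. exp (l * V \<phi> (S!i)))"
          by (simp add: sum_distrib_left exp_sum)
        also have "\<dots> \<le> (\<Prod>i<n. 1 + c * V \<phi> (S!i))"
        proof (intro prod_mono conjI)
          fix i
          have "convex_on UNIV (\<lambda>x. exp (l * x))" by (rule convex_on_exp[OF l0])
          from convex_onD[OF this, of "V \<phi> (S!i)" 0 1]
          have "exp (l * ((1 - V \<phi> (S!i)) *\<^sub>R 0 + V \<phi> (S!i) *\<^sub>R 1)) \<le> (1 - V \<phi> (S!i)) * exp (l * 0) + V \<phi> (S!i) * exp (l * 1)"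
            using Vb[of \<phi> "S!i"] by auto
          then show "exp (l * V \<phi> (S!i)) \<le> 1 + c * V \<phi> (S!i)" by (simp add: c_def algebra_simps)
        qed auto
        finally have P1: "exp (l * (real n * emp_avg S (V \<phi>))) \<le> (\<Prod>i<n. 1 + c * V \<phi> (S!i))"
          using sum_eq by simp
        have "K \<phi> = exp (- l * real n * pp \<phi>)"
          unfolding K_def by (simp add: exp_of_nat_mult[symmetric] algebra_simps)
        have "1 \<le> exp (- l * real n * \<tau>) * (exp (- l * real n * pp \<phi>) * exp (l * (real n * emp_avg S (V \<phi>))))"
        proof -
          have "0 \<le> l * real n * (emp_avg S (V \<phi>) - pp \<phi> - \<tau>)" using gt l0 by simp
          then have "1 \<le> exp (l * real n * (emp_avg S (V \<phi>) - pp \<phi> - \<tau>))" by simp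
          also have "\<dots> = exp (- l * real n * \<tau>) * (exp (- l * real n * pp \<phi>) * exp (l * (real n * emp_avg S (V \<phi>))))"
            by (simp add: algebra_simps flip: exp_add)
          finally show ?thesis .
        qed
        also have "\<dots> \<le> exp (- l * real n * \<tau>) * (K \<phi> * (\<Prod>i<n. 1 + c * V \<phi> (S!i)))"
          using P1 \<open>K \<phi> = _\<close> by (intro mult_left_mono) auto
        finally have "1 \<le> exp (- l * real n * \<tau>) * G0 S \<phi>"
          unfolding G0_def by (simp add: atLeast0LessThan)
        then have "ennreal 1 \<le> ennreal (exp (- l * real n * \<tau>) * G0 S \<phi>)" by (rule ennreal_leI)
        then show ?thesis using True by (simp add: ennreal_mult')
      qed
    qed
    also have "\<dots> = ennreal (exp (- l * real n * \<tau>)) * (\<integral>\<^sup>+\<phi>. ennreal (G0 S \<phi>) \<partial>A S)"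
      by (rule nn_integral_cmult, rule mS[OF S]) (unfold G0_def, measurable)
    finally show ?thesis unfolding B_def .
  qed
  have stepn: "(\<integral>\<^sup>+\<phi>. ennreal (Gn S \<phi>) \<partial>A S) \<le> ennreal (R ^ n)" if S: "length S = n" for S
  proof -
    interpret prob_space "A S" using vA[OF S] by simp
    have "(\<integral>\<^sup>+\<phi>. ennreal (Gn S \<phi>) \<partial>A S) \<le> (\<integral>\<^sup>+\<phi>. ennreal (R ^ n) \<partial>A S)"
    proof (intro nn_integral_mono ennreal_leI)
      fix \<phi>
      have "Gn S \<phi> = (exp (- l * pp \<phi>) * (1 + c * exp \<epsilon> * pp \<phi>)) ^ n"
        unfolding Gn_def K_def pp_def by (simp add: power_mult_distrib)
      also have "\<dots> \<le> R ^ n"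
      proof (intro power_mono)
        show "exp (- l * pp \<phi>) * (1 + c * exp \<epsilon> * pp \<phi>) \<le> R"
          using per_sample[of \<tau> "pp \<phi>" \<epsilon>] tau pp01[of \<phi>] eps0 et
          unfolding R_def l_def c_def by (simp add: mult.assoc)
        show "0 \<le> exp (- l * pp \<phi>) * (1 + c * exp \<epsilon> * pp \<phi>)"
          using c0 pp01[of \<phi>] by (intro mult_nonneg_nonneg add_nonneg_nonneg) auto
      qed
      finally show "Gn S \<phi> \<le> R ^ n" .
    qed
    also have "\<dots> = ennreal (R ^ n)" by (simp add: emeasure_space_1)
    finally show ?thesis .
  qed
  have "(\<integral>\<^sup>+S. emeasure (A S) {\<phi> \<in> space (A S). emp_avg S (V \<phi>) - pop_avg P (V \<phi>) > \<tau>} \<partial>?R)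
      \<le> (\<integral>\<^sup>+S. ennreal (exp (- l * real n * \<tau>)) * (\<integral>\<^sup>+\<phi>. ennreal (G0 S \<phi>) \<partial>A S) \<partial>?R)"
    by (intro nn_integral_mono_AE AE_pmfI step1) (simp add: set_replicate_pmf)
  also have "\<dots> = ennreal (exp (- l * real n * \<tau>)) * (\<integral>\<^sup>+S. \<integral>\<^sup>+\<phi>. ennreal (G0 S \<phi>) \<partial>A S \<partial>?R)"
    by (simp add: nn_integral_cmult)
  also have "(\<integral>\<^sup>+S. \<integral>\<^sup>+\<phi>. ennreal (G0 S \<phi>) \<partial>A S \<partial>?R) \<le> (\<integral>\<^sup>+S. \<integral>\<^sup>+\<phi>. ennreal (Gn S \<phi>) \<partial>A S \<partial>?R)"
    unfolding G0_def Gn_def by (rule core_iter[OF Vm Vb Km K0 c0 order.refl])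
  also have "\<dots> \<le> (\<integral>\<^sup>+S. ennreal (R ^ n) \<partial>?R)"
    by (intro nn_integral_mono_AE AE_pmfI stepn) (simp add: set_replicate_pmf)
  also have "\<dots> = ennreal (R ^ n)" by (simp add: measure_pmf.emeasure_space_1)
  finally have "(\<integral>\<^sup>+S. emeasure (A S) {\<phi> \<in> space (A S). emp_avg S (V \<phi>) - pop_avg P (V \<phi>) > \<tau>} \<partial>?R)
      \<le> ennreal (exp (- l * real n * \<tau>)) * ennreal (R ^ n)" by (simp add: mult_left_mono)
  also have "\<dots> = ennreal (exp (- (real n * \<tau>^2 / 12)))"
  proof -
    have "exp (- l * real n * \<tau>) * R ^ n = exp (- l * real n * \<tau> + real n * (2*\<tau>*\<tau> - \<tau>^2/12))"
      by (simp only: R_def exp_of_nat_mult[symmetric] exp_add[symmetric])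
    also have "\<dots> = exp (- (real n * \<tau>^2 / 12))"
      unfolding l_def by (simp add: algebra_simps power2_eq_square)
    finally show ?thesis by (simp add: ennreal_mult'[symmetric])
  qed
  finally show ?thesis .
qed

end


lemma measure_le_AE_bound:
  assumes "finite_measure M" and "AE \<phi> in M. indicator B \<phi> \<le> g \<phi>"
  shows "ennreal (measure M B) \<le> (\<integral>\<^sup>+\<phi>. g \<phi> \<partial>M)"
proof (cases "B \<in> sets M")
  case True
  interpret finite_measure M by fact
  have "ennreal (measure M B) = emeasure M B" by (simp add: emeasure_eq_measure)
  also have "\<dots> = (\<integral>\<^sup>+\<phi>. indicator B \<phi> \<partial>M)" using True by simp
  also have "\<dots> \<le> (\<integral>\<^sup>+\<phi>. g \<phi> \<partial>M)" by (rule nn_integral_mono_AE[OF assms(2)])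
  finally show ?thesis .
next
  case False
  then show ?thesis by (simp add: measure_notin_sets)
qed

theorem theorem3p2:
  fixes A :: "'a::countable list \<Rightarrow> ('a \<Rightarrow> real) measure"
    and P :: "'a pmf" and n :: nat and \<epsilon> \<beta> \<tau> :: real
  assumes valid: "\<And>S. length S = n \<Longrightarrow>
                    prob_space (A S) \<and> sets (A S) = sets out_space \<and>
                    (AE \<phi> in A S. \<forall>x. 0 \<le> \<phi> x \<and> \<phi> x \<le> 1)"
    and dp: "diff_private \<epsilon> 0 n A"
    and \<beta>: "\<beta> > 0" and \<tau>: "\<tau> > 0"
    and n: "real n \<ge> 12 * ln (4 / \<beta>) / \<tau>\<^sup>2"
    and \<epsilon>: "\<epsilon> \<le> \<tau> / 2"
  shows "measure_pmf.expectation (replicate_pmf n P)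
           (\<lambda>S. measure (A S) {\<phi> \<in> space (A S). \<bar>pop_avg P \<phi> - emp_avg S \<phi>\<bar> > \<tau>}) \<le> \<beta>"
proof -
  define e' where "e' = max \<epsilon> 0"
  interpret dpalg A n e'
  proof
    show "\<And>S. length S = n \<Longrightarrow> prob_space (A S) \<and> sets (A S) = sets out_space" using valid by auto
    show "0 \<le> e'" by (simp add: e'_def)
    fix x y E assume xy: "length x = n" "length y = n" "adjacent x y" and E: "E \<in> sets (A x)"
    have "measure (A x) E \<le> exp \<epsilon> * measure (A y) E + 0"
      using dp xy E unfolding diff_private_def by blast
    also have "\<dots> \<le> exp e' * measure (A y) E"
      by (simp, intro mult_right_mono) (auto simp: e'_def)
    finally show "measure (A x) E \<le> exp e' * measure (A y) E" by simp
  qed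
  define B where "B = (\<lambda>S. {\<phi> \<in> space (A S). \<bar>pop_avg P \<phi> - emp_avg S \<phi>\<bar> > \<tau>})"
  let ?R = "replicate_pmf n P"
  have Snn: "S \<in> set_pmf ?R \<Longrightarrow> length S = n" for S by (simp add: set_replicate_pmf)
  have fin: "length S = n \<Longrightarrow> finite_measure (A S)" for S
    using valid[of S] by (auto intro: prob_space.finite_measure)
  have main: "(\<integral>\<^sup>+S. ennreal (measure (A S) (B S)) \<partial>measure_pmf ?R) \<le> ennreal \<beta>"
  proof (cases "\<beta> \<ge> 1")
    case True
    have "(\<integral>\<^sup>+S. ennreal (measure (A S) (B S)) \<partial>measure_pmf ?R) \<le> (\<integral>\<^sup>+S. 1 \<partial>measure_pmf ?R)"
    proof (intro nn_integral_mono_AE AE_pmfI)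
      fix S assume "S \<in> set_pmf ?R"
      then have "prob_space (A S)" using valid Snn by blast
      then show "ennreal (measure (A S) (B S)) \<le> 1" by (simp add: prob_space.prob_le_1)
    qed
    also have "\<dots> = 1" by (simp add: measure_pmf.emeasure_space_1)
    also have "\<dots> \<le> ennreal \<beta>" using True by simp
    finally show ?thesis .
  next
    case False
    then have b1: "\<beta> < 1" by simp
    have lnpos: "0 < ln (4 / \<beta>)" using \<beta> b1 by (simp add: ln_gt_zero_iff)
    then have "0 < 12 * ln (4 / \<beta>) / \<tau>\<^sup>2" using \<tau> by simp
    with n have n0: "0 < n" by linarith
    show ?thesis
    proof (cases "\<tau> \<le> 1")
      case False
      have "(\<integral>\<^sup>+S. ennreal (measure (A S) (B S)) \<partial>measure_pmf ?R) \<le> (\<integral>\<^sup>+S. 0 \<partial>measure_pmf ?R)"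
      proof (intro nn_integral_mono_AE AE_pmfI)
        fix S assume "S \<in> set_pmf ?R"
        then have S: "length S = n" using Snn by blast
        have "ennreal (measure (A S) (B S)) \<le> (\<integral>\<^sup>+\<phi>. 0 \<partial>A S)"
        proof (rule measure_le_AE_bound[OF fin[OF S]])
          show "AE \<phi> in A S. indicator (B S) \<phi> \<le> (0::ennreal)"
            using conjunct2[OF conjunct2[OF valid[OF S]]]
          proof eventually_elim
            case (elim \<phi>)
            have "0 \<le> pop_avg P \<phi>" "pop_avg P \<phi> \<le> 1" using pop_nn(2,3)[of \<phi> P] elim by auto
            moreover have "0 \<le> emp_avg S \<phi>" "emp_avg S \<phi> \<le> 1"
            proof -
              have "(\<Sum>i<length S. \<phi> (S!i)) \<le> (\<Sum>i<length S. 1)" using elim by (intro sum_mono) auto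
              then show "emp_avg S \<phi> \<le> 1" using S n0 unfolding emp_avg_def by (simp add: divide_le_eq)
              show "0 \<le> emp_avg S \<phi>" unfolding emp_avg_def using elim by (intro divide_nonneg_nonneg sum_nonneg) auto
            qed
            ultimately have "\<phi> \<notin> B S" using False unfolding B_def by auto
            then show ?case by simp
          qed
        qed
        then show "ennreal (measure (A S) (B S)) \<le> 0" by simp
      qed
      also have "\<dots> \<le> ennreal \<beta>" by simp
      finally show ?thesis .
    next
      case True
      define V1 :: "('a \<Rightarrow> real) \<Rightarrow> 'a \<Rightarrow> real" where "V1 = (\<lambda>\<phi> x. min 1 (max 0 (\<phi> x)))"
      define V2 :: "('a \<Rightarrow> real) \<Rightarrow> 'a \<Rightarrow> real" where "V2 = (\<lambda>\<phi> x. 1 - min 1 (max 0 (\<phi> x)))"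
      have V1m: "(\<lambda>\<phi>. V1 \<phi> x) \<in> borel_measurable out_space" for x
        unfolding V1_def out_space_def by measurable
      have V2m: "(\<lambda>\<phi>. V2 \<phi> x) \<in> borel_measurable out_space" for x
        unfolding V2_def out_space_def by measurable
      have V1b: "0 \<le> V1 \<phi> x \<and> V1 \<phi> x \<le> 1" for \<phi> x unfolding V1_def by auto
      have V2b: "0 \<le> V2 \<phi> x \<and> V2 \<phi> x \<le> 1" for \<phi> x unfolding V2_def by auto
      have et: "e' \<le> \<tau>/2" using \<epsilon> \<tau> by (simp add: e'_def)
      define B1 where "B1 = (\<lambda>S. {\<phi> \<in> space (A S). emp_avg S (V1 \<phi>) - pop_avg P (V1 \<phi>) > \<tau>})"
      define B2 where "B2 = (\<lambda>S. {\<phi> \<in> space (A S). emp_avg S (V2 \<phi>) - pop_avg P (V2 \<phi>) > \<tau>})"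
      have t1: "(\<integral>\<^sup>+S. emeasure (A S) (B1 S) \<partial>measure_pmf ?R) \<le> ennreal (exp (- (real n * \<tau>^2 / 12)))"
        unfolding B1_def by (rule upper_tail[OF V1m V1b \<tau> True et n0])
      have t2: "(\<integral>\<^sup>+S. emeasure (A S) (B2 S) \<partial>measure_pmf ?R) \<le> ennreal (exp (- (real n * \<tau>^2 / 12)))"
        unfolding B2_def by (rule upper_tail[OF V2m V2b \<tau> True et n0])
      have pw: "ennreal (measure (A S) (B S)) \<le> emeasure (A S) (B1 S) + emeasure (A S) (B2 S)"
        if S: "length S = n" for S
      proof -
        have mS: "f \<in> borel_measurable (A S)" if "f \<in> borel_measurable out_space" for f :: "_ \<Rightarrow> real"
          by (subst measurable_cong_sets[OF conjunct1[OF conjunct2[OF valid[OF S]]] refl]) (rule that)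
        have pmk: "(\<lambda>\<phi>. pop_avg P (V \<phi>)) \<in> borel_measurable (A S)"
          if "\<And>x. (\<lambda>\<phi>. V \<phi> x) \<in> borel_measurable out_space" "\<And>\<phi> x. 0 \<le> V \<phi> x \<and> V \<phi> x \<le> 1" for V
          by (rule mS, rule pop_measurable[OF that])
        have emk: "(\<lambda>\<phi>. emp_avg S (V \<phi>)) \<in> borel_measurable (A S)"
          if "\<And>x. (\<lambda>\<phi>. V \<phi> x) \<in> borel_measurable out_space" for V
          unfolding emp_avg_def by (intro mS borel_measurable_divide borel_measurable_sum that measurable_const) auto
        have B1s: "B1 S \<in> sets (A S)" unfolding B1_def
          using pmk[OF V1m V1b] emk[OF V1m] by measurable
        have B2s: "B2 S \<in> sets (A S)" unfolding B2_def
          using pmk[OF V2m V2b] emk[OF V2m] by measurable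
        have "ennreal (measure (A S) (B S)) \<le> (\<integral>\<^sup>+\<phi>. indicator (B1 S) \<phi> + indicator (B2 S) \<phi> \<partial>A S)"
        proof (rule measure_le_AE_bound[OF fin[OF S]])
          show "AE \<phi> in A S. indicator (B S) \<phi> \<le> (indicator (B1 S) \<phi> + indicator (B2 S) \<phi> :: ennreal)"
            using conjunct2[OF conjunct2[OF valid[OF S]]]
          proof eventually_elim
            case (elim \<phi>)
            have v1: "V1 \<phi> = \<phi>" using elim unfolding V1_def by (auto intro!: ext)
            have v2: "V2 \<phi> = (\<lambda>x. 1 - \<phi> x)" using elim unfolding V2_def by (auto intro!: ext)
            have int: "integrable (measure_pmf P) \<phi>"
              by (rule measure_pmf.integrable_const_bound[where B=1]) (use elim in auto)
            have p2: "pop_avg P (V2 \<phi>) = 1 - pop_avg P \<phi>"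
              unfolding v2 pop_avg_def using int by (subst Bochner_Integration.integral_diff) auto
            have e2: "emp_avg S (V2 \<phi>) = 1 - emp_avg S \<phi>"
              unfolding v2 emp_avg_def using S n0 by (simp add: sum_subtractf diff_divide_distrib)
            show ?case
            proof (cases "\<phi> \<in> B S")
              case False then show ?thesis by simp
            next
              case True
              then have sp: "\<phi> \<in> space (A S)" and gt: "\<bar>pop_avg P \<phi> - emp_avg S \<phi>\<bar> > \<tau>" unfolding B_def by auto
              then have "\<phi> \<in> B1 S \<or> \<phi> \<in> B2 S" using v1 p2 e2 unfolding B1_def B2_def by auto
              then show ?thesis using True by (auto simp: indicator_def)
            qed
          qed
        qed
        also have "\<dots> = emeasure (A S) (B1 S) + emeasure (A S) (B2 S)"
          using B1s B2s by (simp add: nn_integral_add)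
        finally show ?thesis .
      qed
      have "(\<integral>\<^sup>+S. ennreal (measure (A S) (B S)) \<partial>measure_pmf ?R)
          \<le> (\<integral>\<^sup>+S. emeasure (A S) (B1 S) + emeasure (A S) (B2 S) \<partial>measure_pmf ?R)"
        by (intro nn_integral_mono_AE AE_pmfI pw Snn)
      also have "\<dots> = (\<integral>\<^sup>+S. emeasure (A S) (B1 S) \<partial>measure_pmf ?R) + (\<integral>\<^sup>+S. emeasure (A S) (B2 S) \<partial>measure_pmf ?R)"
        by (simp add: nn_integral_add)
      also have "\<dots> \<le> ennreal (exp (- (real n * \<tau>^2 / 12))) + ennreal (exp (- (real n * \<tau>^2 / 12)))"
        by (intro add_mono t1 t2)
      also have "\<dots> \<le> ennreal \<beta>"
      proof -
        have "ln (4 / \<beta>) \<le> real n * \<tau>^2 / 12"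
          using n \<tau> by (simp add: divide_le_eq mult.commute)
        then have "exp (- (real n * \<tau>^2 / 12)) \<le> exp (- ln (4 / \<beta>))" by simp
        also have "\<dots> = \<beta> / 4" using \<beta> by (simp add: exp_minus)
        finally have "exp (- (real n * \<tau>^2 / 12)) + exp (- (real n * \<tau>^2 / 12)) \<le> \<beta>" using \<beta> by simp
        then have "ennreal (exp (- (real n * \<tau>^2 / 12)) + exp (- (real n * \<tau>^2 / 12))) \<le> ennreal \<beta>"
          by (rule ennreal_leI)
        then show ?thesis by (simp add: ennreal_plus[symmetric] del: ennreal_plus)
      qed
      finally show ?thesis .
    qed
  qed
  have "measure_pmf.expectation ?R (\<lambda>S. measure (A S) (B S)) = enn2real (\<integral>\<^sup>+S. ennreal (measure (A S) (B S)) \<partial>measure_pmf ?R)"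
    by (rule integral_eq_nn_integral) auto
  also have "\<dots> \<le> \<beta>" using main \<beta> by (intro enn2real_leI) auto
  finally show ?thesis unfolding B_def .
qed


end
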